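(* Let $(X,d^\star)$ be a $\star$-metric space, $\{x_n\}_{n\in\mathbb{N}}$ a sequence in $X$ and $x_0\in X$. Then $\{x_n\}$ converges to $x_0$ in the topological space $(X,\mathscr{T}_{d^\star})$ if and only if $\{x_n\}$ converges to $x_0$ under $d^\star$, i.e. for every $\epsilon>0$ there is $k\in\mathbb{N}$ with $d^\star(x_0,x_n)<\epsilon$ for all $n\ge k$.
   Context: A $t$-definer is a function $\star:[0,\infty)\times[0,\infty)\to[0,\infty)$ such that for all $a,b,c\ge 0$: $a\star b=b\star a$; $a\star(b\star c)=(a\star b)\star c$; if $a\le b$ then $a\star c\le b\star c$; $a\star 0=a$; and $\star$ is continuous in its first variable with respect to the Euclidean topology. Given a nonempty set $X$ and a $t$-definer $\star$, a $\star$-metric on $X$ is a function $d^\star:X\times X\to[0,\infty)$ such that for all $x,y,z\in X$: $d^\star(x,y)=0$ iff $x=y$; $d^\star(x,y)=d^\star(y,x)$; and $d^\star(x,y)\le d^\star(x,z)\star d^\star(z,y)$. Put $B_{d^\star}(a,r)=\{x\in X: d^\star(a,x)<r\}$ and let $\mathscr{T}_{d^\star}$ be the topology consisting of all $U\subseteq X$ such that for each $a\in U$ some $B_{d^\star}(a,r)$, $r>0$, is contained in $U$. *)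

theory Defs
  imports "HOL-Analysis.Analysis"
begin

text \<open>A t-definer: a binary operation on [0,\<infinity>) (represented as a real function
whose behaviour is only constrained on nonnegative arguments).\<close>
definition t_definer :: "(real \<Rightarrow> real \<Rightarrow> real) \<Rightarrow> bool" where
  "t_definer s \<longleftrightarrow>
     (\<forall>a\<ge>0. \<forall>b\<ge>0. s a b \<ge> 0) \<and>
     (\<forall>a\<ge>0. \<forall>b\<ge>0. s a b = s b a) \<and>
     (\<forall>a\<ge>0. \<forall>b\<ge>0. \<forall>c\<ge>0. s a (s b c) = s (s a b) c) \<and>
     (\<forall>a\<ge>0. \<forall>b\<ge>0. \<forall>c\<ge>0. a \<le> b \<longrightarrow> s a c \<le> s b c) \<and>
     (\<forall>a\<ge>0. s a 0 = a) \<and>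
     (\<forall>c\<ge>0. continuous_on {0..} (\<lambda>a. s a c))"

definition star_metric :: "(real \<Rightarrow> real \<Rightarrow> real) \<Rightarrow> 'a set \<Rightarrow> ('a \<Rightarrow> 'a \<Rightarrow> real) \<Rightarrow> bool" where
  "star_metric s X d \<longleftrightarrow>
     (\<forall>x\<in>X. \<forall>y\<in>X. d x y \<ge> 0) \<and>
     (\<forall>x\<in>X. \<forall>y\<in>X. d x y = 0 \<longleftrightarrow> x = y) \<and>
     (\<forall>x\<in>X. \<forall>y\<in>X. d x y = d y x) \<and>
     (\<forall>x\<in>X. \<forall>y\<in>X. \<forall>z\<in>X. d x y \<le> s (d x z) (d z y))"

definition star_ball :: "'a set \<Rightarrow> ('a \<Rightarrow> 'a \<Rightarrow> real) \<Rightarrow> 'a \<Rightarrow> real \<Rightarrow> 'a set" where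
  "star_ball X d a r = {x \<in> X. d a x < r}"

definition star_open :: "'a set \<Rightarrow> ('a \<Rightarrow> 'a \<Rightarrow> real) \<Rightarrow> 'a set \<Rightarrow> bool" where
  "star_open X d U \<longleftrightarrow> U \<subseteq> X \<and> (\<forall>a\<in>U. \<exists>r>0. star_ball X d a r \<subseteq> U)"

text \<open>The topology T_{d*} on X (star_open is a topology on X; this is part of the
later proof obligation, the statement uses it via the library type topology).\<close>
definition star_topology :: "'a set \<Rightarrow> ('a \<Rightarrow> 'a \<Rightarrow> real) \<Rightarrow> 'a topology" where
  "star_topology X d = topology (star_open X d)"

end

theory Submission
  imports Defs
begin

lemma star_istop: "istopology (star_open X d)"
  unfolding istopology_def star_open_def
proof (intro conjI allI impI)
  fix S T assume S: "S \<subseteq> X \<and> (\<forall>a\<in>S. \<exists>r>0. star_ball X d a r \<subseteq> S)"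
    and T: "T \<subseteq> X \<and> (\<forall>a\<in>T. \<exists>r>0. star_ball X d a r \<subseteq> T)"
  show "S \<inter> T \<subseteq> X" using S by blast
  show "\<forall>a\<in>S \<inter> T. \<exists>r>0. star_ball X d a r \<subseteq> S \<inter> T"
  proof
    fix a assume "a \<in> S \<inter> T"
    then obtain r1 r2 where "r1>0" "star_ball X d a r1 \<subseteq> S" "r2>0" "star_ball X d a r2 \<subseteq> T"
      using S T by blast
    then show "\<exists>r>0. star_ball X d a r \<subseteq> S \<inter> T"
      by (intro exI[of _ "min r1 r2"]) (auto simp: star_ball_def)
  qed
next
  fix K assume K: "\<forall>S\<in>K. S \<subseteq> X \<and> (\<forall>a\<in>S. \<exists>r>0. star_ball X d a r \<subseteq> S)"
  show "\<Union>K \<subseteq> X" using K by blast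
  show "\<forall>a\<in>\<Union>K. \<exists>r>0. star_ball X d a r \<subseteq> \<Union>K"
  proof
    fix a assume "a \<in> \<Union>K"
    then obtain S where S: "S \<in> K" "a \<in> S" by blast
    then obtain r where "r > 0" "star_ball X d a r \<subseteq> S" using K by blast
    then show "\<exists>r>0. star_ball X d a r \<subseteq> \<Union>K" using S(1) by blast
  qed
qed

lemma openin_star: "openin (star_topology X d) = star_open X d"
  unfolding star_topology_def using star_istop topology_inverse' by blast

lemma topspace_star: "topspace (star_topology X d) = X"
proof -
  have "star_open X d X" by (auto simp: star_open_def star_ball_def intro: exI[of _ 1])
  then show ?thesis unfolding topspace_def openin_star by (auto simp: star_open_def)
qed

lemma td_comm: "t_definer s \<Longrightarrow> a \<ge> 0 \<Longrightarrow> b \<ge> 0 \<Longrightarrow> s a b = s b a"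
  unfolding t_definer_def by (elim conjE) (drule spec[of _ a], simp)
lemma td_zero: "t_definer s \<Longrightarrow> a \<ge> 0 \<Longrightarrow> s a 0 = a"
  unfolding t_definer_def by (elim conjE) (drule spec[of _ a], simp)
lemma td_cont: "t_definer s \<Longrightarrow> c \<ge> 0 \<Longrightarrow> continuous_on {0..} (\<lambda>a. s a c)"
  unfolding t_definer_def by (elim conjE) (drule spec[of _ c], simp)
lemma sm_nonneg: "star_metric s X d \<Longrightarrow> x \<in> X \<Longrightarrow> y \<in> X \<Longrightarrow> d x y \<ge> 0"
  unfolding star_metric_def by (elim conjE) (drule bspec[of _ _ x], simp, simp)
lemma sm_zero: "star_metric s X d \<Longrightarrow> x \<in> X \<Longrightarrow> d x x = 0"
  unfolding star_metric_def by (elim conjE) (drule bspec[of _ _ x], simp, simp)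
lemma sm_tri: "star_metric s X d \<Longrightarrow> x \<in> X \<Longrightarrow> y \<in> X \<Longrightarrow> z \<in> X \<Longrightarrow> d x y \<le> s (d x z) (d z y)"
  unfolding star_metric_def by (elim conjE) (drule bspec[of _ _ x], simp, drule bspec[of _ _ y], simp, simp)

lemma ball_open:
  assumes ts: "t_definer s" and sm: "star_metric s X d" and x0: "x0 \<in> X" and e: "e > 0"
  shows "star_open X d (star_ball X d x0 e)"
  unfolding star_open_def
proof (intro conjI ballI)
  show "star_ball X d x0 e \<subseteq> X" by (auto simp: star_ball_def)
  fix y assume y: "y \<in> star_ball X d x0 e"
  define r where "r = d x0 y"
  have yX: "y \<in> X" and re: "r < e" using y by (auto simp: star_ball_def r_def)
  have r0: "r \<ge> 0" using sm_nonneg[OF sm x0 yX] by (simp add: r_def)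
  have cont: "continuous_on {0..} (\<lambda>a. s a r)" using td_cont[OF ts r0] .
  have s0: "s 0 r = r" using td_comm[OF ts _ r0, of 0] td_zero[OF ts r0] by simp
  obtain \<delta> where dp: "\<delta> > 0" and dd: "\<forall>c\<in>{0..}. dist c 0 < \<delta> \<longrightarrow> dist (s c r) (s 0 r) < e - r"
  proof -
    have "(0::real) \<in> {0..}" by simp
    moreover have "e - r > 0" using re by simp
    ultimately show ?thesis using cont that unfolding continuous_on_iff by blast
  qed
  show "\<exists>\<delta>>0. star_ball X d y \<delta> \<subseteq> star_ball X d x0 e"
  proof (intro exI conjI subsetI)
    show "\<delta> > 0" by fact
    fix z assume z: "z \<in> star_ball X d y \<delta>"
    then have zX: "z \<in> X" and c: "d y z < \<delta>" by (auto simp: star_ball_def)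
    have c0: "d y z \<ge> 0" using sm_nonneg[OF sm yX zX] .
    have "d x0 z \<le> s r (d y z)" using sm_tri[OF sm x0 zX yX] by (simp add: r_def)
    also have "\<dots> = s (d y z) r" using td_comm[OF ts r0 c0] .
    also have "\<dots> < e"
    proof -
      have "dist (s (d y z) r) (s 0 r) < e - r" using dd c0 c by (simp add: dist_real_def)
      then show ?thesis using s0 by (simp add: dist_real_def)
    qed
    finally show "z \<in> star_ball X d x0 e" using zX by (simp add: star_ball_def)
  qed
qed

theorem proposition4p2:
  fixes s :: "real \<Rightarrow> real \<Rightarrow> real" and X :: "'a set"
    and d :: "'a \<Rightarrow> 'a \<Rightarrow> real" and x :: "nat \<Rightarrow> 'a" and x0 :: 'a
  assumes "t_definer s" and "star_metric s X d"
    and "\<forall>n. x n \<in> X" and "x0 \<in> X"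
  shows "limitin (star_topology X d) x x0 sequentially \<longleftrightarrow>
         (\<forall>\<epsilon>>0. \<exists>k. \<forall>n\<ge>k. d x0 (x n) < \<epsilon>)"
proof
  assume L: "limitin (star_topology X d) x x0 sequentially"
  show "\<forall>\<epsilon>>0. \<exists>k. \<forall>n\<ge>k. d x0 (x n) < \<epsilon>"
  proof (intro allI impI)
    fix e :: real assume e: "e > 0"
    have "x0 \<in> star_ball X d x0 e" using sm_zero[OF assms(2,4)] assms(4) e unfolding star_ball_def by simp
    then have "eventually (\<lambda>n. x n \<in> star_ball X d x0 e) sequentially"
    proof -
      have "\<forall>U. openin (star_topology X d) U \<and> x0 \<in> U \<longrightarrow> eventually (\<lambda>n. x n \<in> U) sequentially"
        using L unfolding limitin_def by (rule conjunct2)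
      then show ?thesis using ball_open[OF assms(1,2,4) e] \<open>x0 \<in> star_ball X d x0 e\<close>
        unfolding openin_star by blast
    qed
    then obtain k where "\<forall>n\<ge>k. x n \<in> star_ball X d x0 e"
      unfolding eventually_sequentially by blast
    then show "\<exists>k. \<forall>n\<ge>k. d x0 (x n) < e"
      unfolding star_ball_def by blast
  qed
next
  assume R: "\<forall>\<epsilon>>0. \<exists>k. \<forall>n\<ge>k. d x0 (x n) < \<epsilon>"
  show "limitin (star_topology X d) x x0 sequentially"
    unfolding limitin_def topspace_star openin_star
  proof (intro conjI allI impI)
    show "x0 \<in> X" by fact
    fix U assume U: "star_open X d U \<and> x0 \<in> U"
    then obtain r where r: "r > 0" "star_ball X d x0 r \<subseteq> U" unfolding star_open_def by blast
    then obtain k where k: "\<forall>n\<ge>k. d x0 (x n) < r" using R by blast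
    have "\<forall>n\<ge>k. x n \<in> U"
    proof (intro allI impI)
      fix n assume "n \<ge> k"
      then have "x n \<in> star_ball X d x0 r" using k assms(3) unfolding star_ball_def by blast
      then show "x n \<in> U" using r(2) by blast
    qed
    then show "eventually (\<lambda>n. x n \<in> U) sequentially"
      unfolding eventually_sequentially by blast
  qed
qed

end
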